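(* Let $K$ be a field with $\mathrm{char}(K) = 0$ or $\mathrm{char}(K) > n$. Let $f \in K[x_1,\dots,x_n]$ be a homogeneous polynomial of degree $d$ all of whose terms are square-free. If $f(1,1,\dots,1) \neq 0$ in $K$, then for every $N \ge n+d$, in the polynomial ring $K[x_1,\dots,x_N]$ one has $$(S_N.f) = (S_N.\,x_1x_2\cdots x_d).$$ Conversely, if $f(1,1,\dots,1) = 0$ in $K$, then for every $N \ge n$ the radical $\sqrt{(S_N.f)}\subseteq K[x_1,\dots,x_N]$ contains no monomial.
   Context: $S_N$ acts on $K[x_1,\dots,x_N]$ by $\sigma.x_i = x_{\sigma(i)}$; $f$ is viewed as an element of $K[x_1,\dots,x_N]$ for $N\ge n$; $(S_N.f)$ is the ideal generated by the orbit of $f$, and $(S_N.\,x_1\cdots x_d)$ is the ideal generated by all square-free monomials of degree $d$ in $x_1,\dots,x_N$. *)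

theory Defs
  imports "HOL-Library.Poly_Mapping" "HOL-Combinatorics.Permutations"
begin

text \<open>Multivariate polynomials: finitely supported maps from monomials (exponent vectors
  nat =>0 nat) to coefficients. Variable x_(i+1) of the paper is index i here.\<close>
type_synonym 'a mpoly = "(nat \<Rightarrow>\<^sub>0 nat) \<Rightarrow>\<^sub>0 'a"

definition in_vars :: "nat \<Rightarrow> 'a::zero mpoly \<Rightarrow> bool" where
  "in_vars N p \<longleftrightarrow> (\<forall>\<alpha>\<in>Poly_Mapping.keys p. Poly_Mapping.keys \<alpha> \<subseteq> {..<N})"

definition rename_mono :: "(nat \<Rightarrow> nat) \<Rightarrow> (nat \<Rightarrow>\<^sub>0 nat) \<Rightarrow> (nat \<Rightarrow>\<^sub>0 nat)" where
  "rename_mono \<sigma> \<alpha> = (\<Sum>i\<in>Poly_Mapping.keys \<alpha>. Poly_Mapping.single (\<sigma> i) (Poly_Mapping.lookup \<alpha> i))"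

definition perm_act :: "(nat \<Rightarrow> nat) \<Rightarrow> 'a::comm_monoid_add mpoly \<Rightarrow> 'a mpoly" where
  "perm_act \<sigma> p = (\<Sum>\<alpha>\<in>Poly_Mapping.keys p.
      Poly_Mapping.single (rename_mono \<sigma> \<alpha>) (Poly_Mapping.lookup p \<alpha>))"

definition orbit :: "nat \<Rightarrow> 'a::comm_monoid_add mpoly \<Rightarrow> 'a mpoly set" where
  "orbit N p = {perm_act \<sigma> p | \<sigma>. \<sigma> permutes {..<N}}"

definition ideal_gen :: "nat \<Rightarrow> 'a::comm_ring_1 mpoly set \<Rightarrow> 'a mpoly set" where
  "ideal_gen N G = {p. \<exists>Q c. finite Q \<and> Q \<subseteq> G \<and> (\<forall>q\<in>Q. in_vars N (c q)) \<and>
                          p = (\<Sum>q\<in>Q. c q * q)}"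

definition eval_mpoly :: "'a::comm_semiring_1 mpoly \<Rightarrow> (nat \<Rightarrow> 'a) \<Rightarrow> 'a" where
  "eval_mpoly p a = (\<Sum>\<alpha>\<in>Poly_Mapping.keys p. Poly_Mapping.lookup p \<alpha> *
       (\<Prod>i\<in>Poly_Mapping.keys \<alpha>. a i ^ Poly_Mapping.lookup \<alpha> i))"

definition monom1 :: "(nat \<Rightarrow>\<^sub>0 nat) \<Rightarrow> 'a::{zero,one} mpoly" where
  "monom1 \<alpha> = Poly_Mapping.single \<alpha> 1"

definition prod_first_vars :: "nat \<Rightarrow> 'a::{zero,one} mpoly" where
  "prod_first_vars d = monom1 (\<Sum>i<d. Poly_Mapping.single i 1)"

end

theory Submission
  imports Defs "HOL-Computational_Algebra.Primes"
begin


lemma pm_expand: "p = (\<Sum>k\<in>Poly_Mapping.keys p. Poly_Mapping.single k (Poly_Mapping.lookup p k))"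
proof (rule poly_mapping_eqI)
  fix x
  show "Poly_Mapping.lookup p x = Poly_Mapping.lookup (\<Sum>k\<in>Poly_Mapping.keys p. Poly_Mapping.single k (Poly_Mapping.lookup p k)) x"
    by (cases "x \<in> Poly_Mapping.keys p")
       (simp_all add: lookup_sum lookup_single when_def in_keys_iff sum.delta[of _ x "\<lambda>k. Poly_Mapping.lookup p k"] 
         sum.neutral)
qed

lemma sum_keys_superset:
  assumes "finite K" "Poly_Mapping.keys p \<subseteq> K" "\<And>k. g k 0 = 0"
  shows "(\<Sum>k\<in>Poly_Mapping.keys p. g k (Poly_Mapping.lookup p k)) = (\<Sum>k\<in>K. g k (Poly_Mapping.lookup p k))"
  by (rule sum.mono_neutral_left) (use assms in \<open>auto simp: in_keys_iff\<close>)

lemma rename_zero[simp]: "rename_mono \<sigma> 0 = 0"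
  by (simp add: rename_mono_def)

lemma rename_add: "rename_mono \<sigma> (a + b) = rename_mono \<sigma> a + rename_mono \<sigma> b"
  unfolding rename_mono_def
  by (rule setsum_keys_plus_distrib) (simp_all add: single_add)

lemma rename_single[simp]: "rename_mono \<sigma> (Poly_Mapping.single i k) = Poly_Mapping.single (\<sigma> i) k"
  by (cases "k = 0") (simp_all add: rename_mono_def)

lemma rename_sum: "rename_mono \<sigma> (sum g A) = (\<Sum>a\<in>A. rename_mono \<sigma> (g a))"
  by (induction A rule: infinite_finite_induct) (simp_all add: rename_add)

lemma rename_comp: "rename_mono \<sigma> (rename_mono \<tau> a) = rename_mono (\<sigma> \<circ> \<tau>) a"
proof -
  have "rename_mono \<sigma> (rename_mono \<tau> a) = rename_mono \<sigma> (rename_mono \<tau> 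
     (\<Sum>k\<in>Poly_Mapping.keys a. Poly_Mapping.single k (Poly_Mapping.lookup a k)))"
    using pm_expand[of a] by simp
  also have "\<dots> = rename_mono (\<sigma> \<circ> \<tau>) (\<Sum>k\<in>Poly_Mapping.keys a. Poly_Mapping.single k (Poly_Mapping.lookup a k))"
    by (simp add: rename_sum)
  finally show ?thesis using pm_expand[of a] by simp
qed

lemma rename_fix: assumes "\<And>i. i \<in> Poly_Mapping.keys a \<Longrightarrow> \<sigma> i = i"
  shows "rename_mono \<sigma> a = a"
proof -
  have "rename_mono \<sigma> a = rename_mono \<sigma> 
     (\<Sum>k\<in>Poly_Mapping.keys a. Poly_Mapping.single k (Poly_Mapping.lookup a k))"
    using pm_expand[of a] by simp
  also have "\<dots> = (\<Sum>k\<in>Poly_Mapping.keys a. Poly_Mapping.single k (Poly_Mapping.lookup a k))"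
    by (simp add: rename_sum assms)
  finally show ?thesis using pm_expand[of a] by simp
qed

lemma keys_rename: "Poly_Mapping.keys (rename_mono \<sigma> a) \<subseteq> \<sigma> ` Poly_Mapping.keys a"
  unfolding rename_mono_def by (rule order.trans[OF keys_sum]) auto

lemma perm_zero[simp]: "perm_act \<sigma> 0 = 0"
  by (simp add: perm_act_def)

lemma perm_add: "perm_act \<sigma> (a + b) = perm_act \<sigma> a + perm_act \<sigma> b"
  unfolding perm_act_def
  by (rule setsum_keys_plus_distrib) (simp_all add: single_add)

lemma perm_single[simp]: "perm_act \<sigma> (Poly_Mapping.single a k) = Poly_Mapping.single (rename_mono \<sigma> a) k"
  by (cases "k = 0") (simp_all add: perm_act_def)

lemma perm_sum: "perm_act \<sigma> (sum g A) = (\<Sum>a\<in>A. perm_act \<sigma> (g a))"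
  by (induction A rule: infinite_finite_induct) (simp_all add: perm_add)

lemma perm_uminus: "perm_act \<sigma> (- a) = - perm_act \<sigma> (a::'a::ab_group_add mpoly)"
  using perm_add[of \<sigma> a "-a"] by (simp add: eq_neg_iff_add_eq_0 add.commute)

lemma perm_diff: "perm_act \<sigma> (a - b) = perm_act \<sigma> a - perm_act \<sigma> (b::'a::ab_group_add mpoly)"
  using perm_add[of \<sigma> a "-b"] by (simp add: perm_uminus)

lemma perm_expand: "perm_act \<sigma> p = (\<Sum>k\<in>Poly_Mapping.keys p. Poly_Mapping.single (rename_mono \<sigma> k) (Poly_Mapping.lookup p k))"
  by (simp add: perm_act_def)

lemma perm_mult: "perm_act \<sigma> (p * q) = perm_act \<sigma> p * perm_act \<sigma> (q::'a::comm_ring_1 mpoly)"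
proof -
  have "p * q = (\<Sum>a\<in>Poly_Mapping.keys p. \<Sum>b\<in>Poly_Mapping.keys q. 
       Poly_Mapping.single a (Poly_Mapping.lookup p a) * Poly_Mapping.single b (Poly_Mapping.lookup q b))"
    by (subst pm_expand[of p], subst pm_expand[of q]) (simp add: sum_product)
  hence "perm_act \<sigma> (p * q) = (\<Sum>a\<in>Poly_Mapping.keys p. \<Sum>b\<in>Poly_Mapping.keys q. 
       Poly_Mapping.single (rename_mono \<sigma> a) (Poly_Mapping.lookup p a) * Poly_Mapping.single (rename_mono \<sigma> b) (Poly_Mapping.lookup q b))"
    by (simp add: perm_sum mult_single rename_add)
  also have "\<dots> = perm_act \<sigma> p * perm_act \<sigma> q"
    by (simp add: perm_expand sum_product)
  finally show ?thesis .
qed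

lemma perm_comp: "perm_act \<sigma> (perm_act \<tau> p) = perm_act (\<sigma> \<circ> \<tau>) p"
  by (simp add: perm_expand[of \<tau>] perm_sum rename_comp) (simp add: perm_expand)

lemma perm_fix: assumes "\<And>a i. a \<in> Poly_Mapping.keys p \<Longrightarrow> i \<in> Poly_Mapping.keys a \<Longrightarrow> \<sigma> i = i"
  shows "perm_act \<sigma> p = p"
proof -
  have "perm_act \<sigma> p = (\<Sum>k\<in>Poly_Mapping.keys p. Poly_Mapping.single k (Poly_Mapping.lookup p k))"
    unfolding perm_expand by (rule sum.cong) (auto simp: rename_fix assms)
  then show ?thesis using pm_expand[of p] by simp
qed

lemma keys_perm: "Poly_Mapping.keys (perm_act \<sigma> p) \<subseteq> rename_mono \<sigma> ` Poly_Mapping.keys p"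
  unfolding perm_act_def by (rule order.trans[OF keys_sum]) auto

lemma perm_one[simp]: "perm_act \<sigma> (1::'a::comm_ring_1 mpoly) = 1"
  using perm_single[of \<sigma> 0 "1::'a"] by simp

lemma perm_power: "perm_act \<sigma> (p ^ k) = perm_act \<sigma> (p::'a::comm_ring_1 mpoly) ^ k"
  by (induction k) (simp_all add: perm_mult)



lemma in_vars_zero[simp]: "in_vars N 0" by (simp add: in_vars_def)
lemma in_vars_one[simp]: "in_vars N (1::'a::comm_ring_1 mpoly)" by (simp add: in_vars_def)
lemma in_vars_const: "in_vars N (Poly_Mapping.single 0 k)" by (simp add: in_vars_def)
lemma in_vars_add: assumes "in_vars N p" "in_vars N q" shows "in_vars N (p + q)"
  using assms keys_add[of p q] unfolding in_vars_def by blast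
lemma in_vars_uminus: "in_vars N p \<Longrightarrow> in_vars N (- (p::'a::ab_group_add mpoly))"
  unfolding in_vars_def by simp
lemma in_vars_mult: "in_vars N p \<Longrightarrow> in_vars N q \<Longrightarrow> in_vars N (p * (q::'a::comm_ring_1 mpoly))"
  unfolding in_vars_def
proof
  fix \<gamma> assume H: "\<forall>\<alpha>\<in>Poly_Mapping.keys p. Poly_Mapping.keys \<alpha> \<subseteq> {..<N}"
     "\<forall>\<alpha>\<in>Poly_Mapping.keys q. Poly_Mapping.keys \<alpha> \<subseteq> {..<N}" and g: "\<gamma> \<in> Poly_Mapping.keys (p * q)"
  then obtain a b where "\<gamma> = a + b" "a \<in> Poly_Mapping.keys p" "b \<in> Poly_Mapping.keys q"
    using keys_mult[of p q] g by blast
  then show "Poly_Mapping.keys \<gamma> \<subseteq> {..<N}" using H keys_add[of a b] by blast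
qed

lemma in_vars_perm: assumes "\<sigma> permutes {..<N}" "in_vars N p" shows "in_vars N (perm_act \<sigma> p)"
  unfolding in_vars_def
proof
  fix \<gamma> assume "\<gamma> \<in> Poly_Mapping.keys (perm_act \<sigma> p)"
  then obtain a where a: "a \<in> Poly_Mapping.keys p" "\<gamma> = rename_mono \<sigma> a" using keys_perm by blast
  have "Poly_Mapping.keys a \<subseteq> {..<N}" using a assms(2) by (auto simp: in_vars_def)
  then show "Poly_Mapping.keys \<gamma> \<subseteq> {..<N}" using keys_rename[of \<sigma> a] a permutes_image[OF assms(1)]
    by (metis image_mono order_trans)
qed

lemma ideal_gen_base: "q \<in> G \<Longrightarrow> q \<in> ideal_gen N G"
  unfolding ideal_gen_def by (rule CollectI, rule exI[of _ "{q}"], rule exI[of _ "\<lambda>_. 1"]) simp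

lemma ideal_gen_zero: "0 \<in> ideal_gen N G"
  unfolding ideal_gen_def by (rule CollectI, rule exI[of _ "{}"]) simp

lemma ideal_gen_add: assumes "p \<in> ideal_gen N G" "p' \<in> ideal_gen N G" shows "p + p' \<in> ideal_gen N G"
proof -
  obtain Q c where Q: "finite Q" "Q \<subseteq> G" "\<forall>q\<in>Q. in_vars N (c q)" "p = (\<Sum>q\<in>Q. c q * q)"
    using assms(1) unfolding ideal_gen_def by blast
  obtain Q' c' where Q': "finite Q'" "Q' \<subseteq> G" "\<forall>q\<in>Q'. in_vars N (c' q)" "p' = (\<Sum>q\<in>Q'. c' q * q)"
    using assms(2) unfolding ideal_gen_def by blast
  define e where "e q = (if q \<in> Q then c q else 0) + (if q \<in> Q' then c' q else 0)" for q
  have "(\<Sum>q\<in>Q \<union> Q'. e q * q) = (\<Sum>q\<in>Q \<union> Q'. (if q \<in> Q then c q * q else 0)) + (\<Sum>q\<in>Q \<union> Q'. (if q \<in> Q' then c' q * q else 0))"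
    unfolding sum.distrib[symmetric] by (rule sum.cong) (auto simp: e_def distrib_right)
  also have "\<dots> = (\<Sum>q\<in>Q. (if q \<in> Q then c q * q else 0)) + (\<Sum>q\<in>Q'. (if q \<in> Q' then c' q * q else 0))"
    by (intro arg_cong2[where f="(+)"] sum.mono_neutral_right) (use Q Q' in auto)
  also have "\<dots> = p + p'" using Q Q' by simp
  finally have eq: "p + p' = (\<Sum>q\<in>Q \<union> Q'. e q * q)" by simp
  have iv: "\<forall>q\<in>Q \<union> Q'. in_vars N (e q)" using Q(3) Q'(3) by (auto simp: e_def intro!: in_vars_add)
  show ?thesis unfolding ideal_gen_def
    by (rule CollectI, rule exI[of _ "Q \<union> Q'"], rule exI[of _ e]) (use Q(1,2) Q'(1,2) eq iv in blast)
qed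

lemma ideal_gen_mult: assumes "p \<in> ideal_gen N G" "in_vars N r" shows "r * p \<in> ideal_gen N G"
proof -
  obtain Q c where Q: "finite Q" "Q \<subseteq> G" "\<forall>q\<in>Q. in_vars N (c q)" "p = (\<Sum>q\<in>Q. c q * q)"
    using assms(1) unfolding ideal_gen_def by blast
  have eq: "r * p = (\<Sum>q\<in>Q. (r * c q) * q)" unfolding Q(4) by (simp add: sum_distrib_left mult.assoc)
  have iv: "\<forall>q\<in>Q. in_vars N (r * c q)" using Q(3) assms(2) by (auto intro: in_vars_mult)
  show ?thesis unfolding ideal_gen_def
    by (rule CollectI, rule exI[of _ Q], rule exI[of _ "\<lambda>q. r * c q"]) (use Q(1,2) eq iv in blast)
qed

lemma ideal_gen_uminus: assumes "p \<in> ideal_gen N G" shows "- p \<in> ideal_gen N G"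
  using ideal_gen_mult[OF assms in_vars_uminus[OF in_vars_one]] by simp

lemma ideal_gen_diff: assumes "p \<in> ideal_gen N G" "p' \<in> ideal_gen N G" shows "p - p' \<in> ideal_gen N G"
  using ideal_gen_add[OF assms(1) ideal_gen_uminus[OF assms(2)]] by simp

lemma ideal_gen_sum: "(\<And>i. i \<in> A \<Longrightarrow> g i \<in> ideal_gen N G) \<Longrightarrow> sum g A \<in> ideal_gen N G"
  by (induction A rule: infinite_finite_induct) (auto intro: ideal_gen_zero ideal_gen_add)

lemma ideal_gen_subset: assumes "G \<subseteq> ideal_gen N H" shows "ideal_gen N G \<subseteq> ideal_gen N H"
proof
  fix p assume "p \<in> ideal_gen N G"
  then obtain Q c where Q: "finite Q" "Q \<subseteq> G" "\<forall>q\<in>Q. in_vars N (c q)" "p = (\<Sum>q\<in>Q. c q * q)"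
    unfolding ideal_gen_def by blast
  show "p \<in> ideal_gen N H" unfolding Q(4)
    by (rule ideal_gen_sum) (use Q assms in \<open>auto intro: ideal_gen_mult\<close>)
qed

lemma ideal_gen_perm: assumes "\<sigma> permutes {..<N}" "\<And>q. q \<in> G \<Longrightarrow> perm_act \<sigma> q \<in> ideal_gen N G"
  and "p \<in> ideal_gen N G" shows "perm_act \<sigma> p \<in> ideal_gen N G"
proof -
  obtain Q c where Q: "finite Q" "Q \<subseteq> G" "\<forall>q\<in>Q. in_vars N (c q)" "p = (\<Sum>q\<in>Q. c q * q)"
    using assms(3) unfolding ideal_gen_def by blast
  have "perm_act \<sigma> p = (\<Sum>q\<in>Q. perm_act \<sigma> (c q) * perm_act \<sigma> q)"
    by (simp add: Q(4) perm_sum perm_mult)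
  also have "\<dots> \<in> ideal_gen N G"
    by (rule ideal_gen_sum) (use Q assms in \<open>auto intro!: ideal_gen_mult in_vars_perm\<close>)
  finally show ?thesis .
qed

lemma orbit_perm: assumes "\<sigma> permutes {..<N}" "p \<in> ideal_gen N (orbit N f)"
  shows "perm_act \<sigma> p \<in> ideal_gen N (orbit N f)"
proof (rule ideal_gen_perm[OF assms(1) _ assms(2)])
  fix q assume "q \<in> orbit N f"
  then obtain \<tau> where "\<tau> permutes {..<N}" "q = perm_act \<tau> f" unfolding orbit_def by blast
  then show "perm_act \<sigma> q \<in> ideal_gen N (orbit N f)"
    using assms(1) by (auto simp: perm_comp orbit_def intro!: ideal_gen_base permutes_compose)
qed

lemma orbit_self: "f \<in> ideal_gen N (orbit N f)"
  proof (rule ideal_gen_base)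
  have "perm_act id f = f" by (rule perm_fix) simp
  then show "f \<in> orbit N f" unfolding orbit_def by (metis (mono_tags, lifting) mem_Collect_eq permutes_id)
qed



definition ev :: "'a::comm_ring_1 mpoly \<Rightarrow> 'a" where
  "ev p = (\<Sum>k\<in>Poly_Mapping.keys p. Poly_Mapping.lookup p k)"

lemma ev_eval: "eval_mpoly p (\<lambda>_. 1) = ev p"
  by (simp add: eval_mpoly_def ev_def)

lemma ev_add: "ev (p + q) = ev p + ev q"
  unfolding ev_def by (rule setsum_keys_plus_distrib) simp_all

lemma ev_zero[simp]: "ev 0 = 0" by (simp add: ev_def)

lemma ev_single[simp]: "ev (Poly_Mapping.single a k) = k"
  by (cases "k = 0") (simp_all add: ev_def)

lemma ev_sum: "ev (sum g A) = (\<Sum>a\<in>A. ev (g a))"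
  by (induction A rule: infinite_finite_induct) (simp_all add: ev_add)


lemma ev_mult: "ev (p * q) = ev p * ev q"
proof -
  have "p * q = (\<Sum>a\<in>Poly_Mapping.keys p. \<Sum>b\<in>Poly_Mapping.keys q. 
       Poly_Mapping.single a (Poly_Mapping.lookup p a) * Poly_Mapping.single b (Poly_Mapping.lookup q b))"
    by (subst pm_expand[of p], subst pm_expand[of q]) (simp add: sum_product)
  hence "ev (p * q) = (\<Sum>a\<in>Poly_Mapping.keys p. \<Sum>b\<in>Poly_Mapping.keys q. 
       Poly_Mapping.lookup p a * Poly_Mapping.lookup q b)"
    by (simp add: ev_sum mult_single)
  also have "\<dots> = ev p * ev q"
    by (simp add: ev_def sum_product)
  finally show ?thesis .
qed

lemma ev_perm: "ev (perm_act \<sigma> p) = ev p"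
  by (simp add: perm_expand ev_sum ev_def[of p])

lemma ev_one[simp]: "ev (1::'a::comm_ring_1 mpoly) = 1"
  using ev_single[of 0 "1::'a"] by simp

lemma ev_power: "ev (p ^ k) = ev p ^ k"
  by (induction k) (simp_all add: ev_mult)

lemma ev_ideal: assumes "ev f = 0" "p \<in> ideal_gen N (orbit N f)" shows "ev p = 0"
proof -
  obtain Q c where Q: "finite Q" "Q \<subseteq> orbit N f" "p = (\<Sum>q\<in>Q. c q * q)"
    using assms(2) unfolding ideal_gen_def by blast
  have "\<forall>q\<in>Q. ev q = 0" using Q(2) assms(1) by (auto simp: orbit_def ev_perm)
  then show ?thesis unfolding Q(3) by (simp add: ev_sum ev_mult)
qed

lemma part2: assumes "eval_mpoly f (\<lambda>_. 1) = (0::'a::field)"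
  shows "monom1 \<alpha> ^ k \<notin> ideal_gen N (orbit N f)"
proof
  assume m: "monom1 \<alpha> ^ k \<in> ideal_gen N (orbit N f)"
  have "ev f = 0" using assms by (simp add: ev_eval)
  then have "ev (monom1 \<alpha> ^ k :: 'a mpoly) = 0" using m by (rule ev_ideal)
  then show False by (simp add: ev_power monom1_def)
qed



definition sq :: "nat set \<Rightarrow> (nat \<Rightarrow>\<^sub>0 nat)" where
  "sq S = (\<Sum>i\<in>S. Poly_Mapping.single i 1)"

definition X :: "nat set \<Rightarrow> 'a::comm_ring_1 mpoly" where
  "X S = monom1 (sq S)"

definition Cst :: "'a::comm_ring_1 \<Rightarrow> 'a mpoly" where
  "Cst k = Poly_Mapping.single 0 k"

definition vars :: "'a::zero mpoly \<Rightarrow> nat set" where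
  "vars p = (\<Union>a\<in>Poly_Mapping.keys p. Poly_Mapping.keys a)"

lemma lookup_sq: "finite S \<Longrightarrow> Poly_Mapping.lookup (sq S) i = (if i \<in> S then 1 else 0)"
  by (simp add: sq_def lookup_sum lookup_single when_def)

lemma keys_sq: "finite S \<Longrightarrow> Poly_Mapping.keys (sq S) = S"
  by (auto simp: in_keys_iff lookup_sq split: if_splits)

lemma sq_keys: assumes "\<And>i. Poly_Mapping.lookup a i \<le> 1" shows "sq (Poly_Mapping.keys a) = a"
proof (rule poly_mapping_eqI)
  fix i show "Poly_Mapping.lookup (sq (Poly_Mapping.keys a)) i = Poly_Mapping.lookup a i"
    using assms[of i] by (auto simp: lookup_sq in_keys_iff)
qed

lemma sq_inj: "finite S \<Longrightarrow> finite T \<Longrightarrow> sq S = sq T \<Longrightarrow> S = T"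
  by (metis keys_sq)

lemma sq_union: "finite S \<Longrightarrow> finite T \<Longrightarrow> S \<inter> T = {} \<Longrightarrow> sq (S \<union> T) = sq S + sq T"
  by (simp add: sq_def sum.union_disjoint)

lemma X_union: "finite S \<Longrightarrow> finite T \<Longrightarrow> S \<inter> T = {} \<Longrightarrow> X (S \<union> T) = X S * (X T :: 'a::comm_ring_1 mpoly)"
  by (simp add: X_def monom1_def sq_union mult_single)

lemma X_empty[simp]: "X {} = 1"
  by (simp add: X_def monom1_def sq_def)

lemma Cst_mult: "Cst a * Cst b = Cst (a * b)"
  by (simp add: Cst_def mult_single)

lemma Cst_one[simp]: "Cst 1 = 1" by (simp add: Cst_def)

lemma Cst_X: "Cst a * X S = Poly_Mapping.single (sq S) a"
  by (simp add: Cst_def X_def monom1_def mult_single)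

lemma in_vars_Cst[simp]: "in_vars N (Cst k)" by (simp add: Cst_def in_vars_const)

lemma rename_sq: "finite S \<Longrightarrow> inj_on \<sigma> S \<Longrightarrow> rename_mono \<sigma> (sq S) = sq (\<sigma> ` S)"
  by (simp add: sq_def rename_sum sum.reindex)

lemma perm_X: "finite S \<Longrightarrow> inj_on \<sigma> S \<Longrightarrow> perm_act \<sigma> (X S) = X (\<sigma> ` S)"
  by (simp add: X_def monom1_def rename_sq)

lemma perm_Cst[simp]: "perm_act \<sigma> (Cst k) = Cst k"
  by (simp add: Cst_def)

lemma perm_prod: "perm_act \<sigma> (prod g A) = (\<Prod>a\<in>A. perm_act \<sigma> (g a :: 'a::comm_ring_1 mpoly))"
  by (induction A rule: infinite_finite_induct) (simp_all add: perm_mult)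

lemma perm_fix_vars: "(\<And>i. i \<in> vars p \<Longrightarrow> \<sigma> i = i) \<Longrightarrow> perm_act \<sigma> p = p"
  by (rule perm_fix) (auto simp: vars_def)

lemma vars_add: "vars (p + q) \<subseteq> vars p \<union> vars q"
  unfolding vars_def using keys_add[of p q] by auto

lemma vars_uminus[simp]: "vars (- (p::'a::ab_group_add mpoly)) = vars p"
  unfolding vars_def by simp

lemma vars_diff: "vars (p - q) \<subseteq> vars p \<union> vars (q::'a::ab_group_add mpoly)"
  using vars_add[of p "-q"] by simp

lemma vars_mult: "vars (p * q) \<subseteq> vars p \<union> vars (q::'a::comm_ring_1 mpoly)"
proof
  fix i assume "i \<in> vars (p * q)"
  then obtain g where g: "g \<in> Poly_Mapping.keys (p * q)" "i \<in> Poly_Mapping.keys g" unfolding vars_def by blast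
  then obtain a b where "g = a + b" "a \<in> Poly_Mapping.keys p" "b \<in> Poly_Mapping.keys q"
    using keys_mult[of p q] by blast
  then show "i \<in> vars p \<union> vars q" using g(2) keys_add[of a b] unfolding vars_def by blast
qed

lemma vars_zero[simp]: "vars 0 = {}" by (simp add: vars_def)
lemma vars_one[simp]: "vars (1::'a::comm_ring_1 mpoly) = {}" by (simp add: vars_def)
lemma vars_Cst[simp]: "vars (Cst k) = {}" by (simp add: vars_def Cst_def)
lemma vars_X[simp]: "finite S \<Longrightarrow> vars (X S :: 'a::comm_ring_1 mpoly) = S"
  by (simp add: vars_def X_def monom1_def keys_sq)

lemma vars_sum: "vars (sum g A) \<subseteq> (\<Union>a\<in>A. vars (g a))"
proof (induction A rule: infinite_finite_induct)
  case (insert x F) then show ?case using vars_add[of "g x" "sum g F"] by auto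
qed auto

lemma vars_prod: "vars (prod g A) \<subseteq> (\<Union>a\<in>A. vars (g a :: 'a::comm_ring_1 mpoly))"
proof (induction A rule: infinite_finite_induct)
  case (insert x F) then show ?case using vars_mult[of "g x" "prod g F"] by auto
qed auto



definition PiA :: "nat set \<Rightarrow> (nat \<Rightarrow> nat) \<Rightarrow> 'a::comm_ring_1 mpoly" where
  "PiA A \<tau> = (\<Prod>a\<in>A. X {a} - X {\<tau> a})"

lemma vars_PiA: "vars (PiA A \<tau> :: 'a::comm_ring_1 mpoly) \<subseteq> A \<union> \<tau> ` A"
proof -
  have "vars (PiA A \<tau> :: 'a mpoly) \<subseteq> (\<Union>a\<in>A. vars (X {a} - X {\<tau> a} :: 'a mpoly))"
    unfolding PiA_def using vars_prod[of "\<lambda>a. X {a} - X {\<tau> a} :: 'a mpoly" A] by (simp add: PiA_def)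
  also have "\<dots> \<subseteq> A \<union> \<tau> ` A" using vars_diff[of "X {_} :: 'a mpoly" "X {_}"] by fastforce
  finally show ?thesis .
qed

lemma perm_fix_sub: "vars p \<subseteq> B \<Longrightarrow> (\<And>i. i \<in> B \<Longrightarrow> \<sigma> i = i) \<Longrightarrow> perm_act \<sigma> p = p"
  by (rule perm_fix_vars) blast

locale stp =
  fixes f :: "'a::field mpoly" and n d N :: nat
  assumes f_vars: "in_vars n f"
    and homog: "\<forall>\<alpha>\<in>Poly_Mapping.keys f. (\<Sum>i\<in>Poly_Mapping.keys \<alpha>. Poly_Mapping.lookup \<alpha> i) = d"
    and sqfree: "\<forall>\<alpha>\<in>Poly_Mapping.keys f. \<forall>i. Poly_Mapping.lookup \<alpha> i \<le> 1"
    and Nbig: "n + d \<le> N"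
begin

definition PP :: "nat set set" where "PP = {S. S \<subseteq> {..<n} \<and> card S = d}"
definition c :: "nat set \<Rightarrow> 'a" where "c S = Poly_Mapping.lookup f (sq S)"

lemma finite_PP: "finite PP"
  unfolding PP_def by (rule finite_subset[of _ "Pow {..<n}"]) auto

lemma PP_finite: "S \<in> PP \<Longrightarrow> finite S"
  unfolding PP_def using finite_subset by blast

lemma keys_f: assumes "a \<in> Poly_Mapping.keys f" shows "a = sq (Poly_Mapping.keys a)" "Poly_Mapping.keys a \<in> PP"
proof -
  show "a = sq (Poly_Mapping.keys a)" using sqfree assms by (simp add: sq_keys)
  have "(\<Sum>i\<in>Poly_Mapping.keys a. Poly_Mapping.lookup a i) = (\<Sum>i\<in>Poly_Mapping.keys a. 1)"
  proof (rule sum.cong)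
    fix i assume "i \<in> Poly_Mapping.keys a"
    then show "Poly_Mapping.lookup a i = 1" using sqfree assms
      by (metis in_keys_iff le_antisym less_one not_le)
  qed simp
  then have "card (Poly_Mapping.keys a) = d" using homog assms by simp
  moreover have "Poly_Mapping.keys a \<subseteq> {..<n}" using f_vars assms by (auto simp: in_vars_def)
  ultimately show "Poly_Mapping.keys a \<in> PP" by (simp add: PP_def)
qed

lemma f_expand: "f = (\<Sum>S\<in>PP. Cst (c S) * X S)"
proof -
  have inj: "inj_on sq PP" by (rule inj_onI) (use PP_finite sq_inj in blast)
  have "(\<Sum>S\<in>PP. Cst (c S) * X S) = (\<Sum>S\<in>PP. Poly_Mapping.single (sq S) (Poly_Mapping.lookup f (sq S)))"
    by (simp add: Cst_X c_def)
  also have "\<dots> = (\<Sum>a\<in>sq ` PP. Poly_Mapping.single a (Poly_Mapping.lookup f a))"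
    by (simp add: sum.reindex[OF inj])
  also have "\<dots> = (\<Sum>a\<in>Poly_Mapping.keys f. Poly_Mapping.single a (Poly_Mapping.lookup f a))"
  proof (rule sum.mono_neutral_right)
    show "finite (sq ` PP)" using finite_PP by simp
    show "Poly_Mapping.keys f \<subseteq> sq ` PP"
    proof
      fix a assume "a \<in> Poly_Mapping.keys f"
      then show "a \<in> sq ` PP" using keys_f[of a] by (metis image_eqI)
    qed
    show "\<forall>i\<in>sq ` PP - Poly_Mapping.keys f. Poly_Mapping.single i (Poly_Mapping.lookup f i) = 0"
      by (simp add: in_keys_iff)
  qed
  finally show ?thesis using pm_expand[of f] by simp
qed

lemma ev_f: "ev f = (\<Sum>S\<in>PP. c S)"
  by (subst f_expand) (simp add: ev_sum Cst_X)


definition gA :: "nat set \<Rightarrow> 'a mpoly" where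
  "gA A = (\<Sum>S\<in>{S\<in>PP. A \<subseteq> S}. Cst (c S) * X (S - A))"

lemma vars_sumX: assumes "\<And>S. S \<in> Q \<Longrightarrow> finite (h S) \<and> h S \<subseteq> B"
  shows "vars (\<Sum>S\<in>Q. Cst (k S) * X (h S) :: 'a mpoly) \<subseteq> B"
proof -
  have "vars (\<Sum>S\<in>Q. Cst (k S) * X (h S) :: 'a mpoly) \<subseteq> (\<Union>S\<in>Q. vars (Cst (k S) * X (h S) :: 'a mpoly))"
    by (rule vars_sum)
  also have "\<dots> \<subseteq> B"
  proof (rule UN_least)
    fix S assume "S \<in> Q"
    then show "vars (Cst (k S) * X (h S) :: 'a mpoly) \<subseteq> B"
      using vars_mult[of "Cst (k S)" "X (h S) :: 'a mpoly"] assms[of S] by auto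
  qed
  finally show ?thesis .
qed

lemma gA_empty: "gA {} = f"
  by (simp add: gA_def f_expand[symmetric])

lemma F_mem: "finite A \<Longrightarrow> A \<subseteq> {..<n} \<Longrightarrow> inj_on \<tau> A \<Longrightarrow> \<tau> ` A \<subseteq> {n..<N} \<Longrightarrow>
   PiA A \<tau> * gA A \<in> ideal_gen N (orbit N f)"
proof (induction A rule: finite_induct)
  case empty
  then show ?case by (simp add: PiA_def gA_empty orbit_self)
next
  case (insert a A)
  have an: "a < n" using insert.prems(1) by auto
  have tn: "n \<le> \<tau> a" "\<tau> a < N" using insert.prems(3) by auto
  have tA: "\<tau> ` A \<subseteq> {n..<N}" using insert.prems(3) by auto
  have taA: "\<tau> a \<notin> \<tau> ` A" using insert.prems(2) insert.hyps(2) by (simp add: inj_on_image_mem_iff)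
  have h: "PiA A \<tau> * gA A \<in> ideal_gen N (orbit N f)"
    using insert.IH insert.prems by (simp add: inj_on_insert)
  define \<sigma> where "\<sigma> = Transposition.transpose a (\<tau> a)"
  have sp: "\<sigma> permutes {..<N}" unfolding \<sigma>_def using an tn Nbig by (intro permutes_swap_id) auto
  have sfix: "\<sigma> i = i" if "i \<noteq> a" "i \<noteq> \<tau> a" for i
    using that by (simp add: \<sigma>_def)
  define g' where "g' = gA (insert a A)"
  define r where "r = (\<Sum>S\<in>{S\<in>PP. A \<subseteq> S \<and> a \<notin> S}. Cst (c S) * X (S - A) :: 'a mpoly)"
  have split: "{S\<in>PP. A \<subseteq> S} = {S\<in>PP. insert a A \<subseteq> S} \<union> {S\<in>PP. A \<subseteq> S \<and> a \<notin> S}" by auto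
  have fin1: "finite {S\<in>PP. insert a A \<subseteq> S}" "finite {S\<in>PP. A \<subseteq> S \<and> a \<notin> S}" using finite_PP by auto
  have g1: "gA A = (\<Sum>S\<in>{S\<in>PP. insert a A \<subseteq> S}. Cst (c S) * X (S - A)) + r"
    unfolding gA_def r_def split by (rule sum.union_disjoint) (use fin1 in auto)
  have "(\<Sum>S\<in>{S\<in>PP. insert a A \<subseteq> S}. Cst (c S) * X (S - A)) = 
        (\<Sum>S\<in>{S\<in>PP. insert a A \<subseteq> S}. X {a} * (Cst (c S) * X (S - insert a A)))"
  proof (rule sum.cong)
    fix S assume S: "S \<in> {S\<in>PP. insert a A \<subseteq> S}"
    then have fS: "finite S" using PP_finite by auto
    have eq: "S - A = {a} \<union> (S - insert a A)" using S insert.hyps(2) by auto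
    have "X (S - A) = X ({a} \<union> (S - insert a A))" by (simp only: eq)
    also have "\<dots> = X {a} * (X (S - insert a A) :: 'a mpoly)" by (rule X_union) (use fS in auto)
    finally have "X (S - A) = X {a} * (X (S - insert a A) :: 'a mpoly)" .
    then show "Cst (c S) * X (S - A) = X {a} * (Cst (c S) * X (S - insert a A))"
      by (simp add: mult.left_commute)
  qed simp
  also have "\<dots> = X {a} * g'" by (simp add: g'_def gA_def sum_distrib_left)
  finally have gsplit: "gA A = X {a} * g' + r" using g1 by simp
  have p1: "perm_act \<sigma> (PiA A \<tau>) = PiA A \<tau>"
  proof (rule perm_fix_sub[OF vars_PiA])
    fix i assume "i \<in> A \<union> \<tau> ` A"
    moreover have "a \<notin> \<tau> ` A" using tA an by auto
    moreover have "\<tau> a \<notin> A" using insert.prems(1) tn by auto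
    ultimately show "\<sigma> i = i" using insert.hyps(2) taA by (intro sfix) auto
  qed
  have p2: "perm_act \<sigma> g' = g'"
  proof (rule perm_fix_sub)
    show "vars g' \<subseteq> {..<n} - {a}" unfolding g'_def gA_def
      by (rule vars_sumX) (auto simp: PP_def dest: finite_subset)
    fix i assume "i \<in> {..<n} - {a}" then show "\<sigma> i = i" using tn by (intro sfix) auto
  qed
  have p3: "perm_act \<sigma> r = r"
  proof (rule perm_fix_sub)
    show "vars r \<subseteq> {..<n} - {a}" unfolding r_def
      by (rule vars_sumX) (auto simp: PP_def dest: finite_subset)
    fix i assume "i \<in> {..<n} - {a}" then show "\<sigma> i = i" using tn by (intro sfix) auto
  qed
  have p4: "perm_act \<sigma> (X {a}) = (X {\<tau> a} :: 'a mpoly)"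
    by (simp add: perm_X \<sigma>_def)
  have "perm_act \<sigma> (PiA A \<tau> * gA A) = PiA A \<tau> * (X {\<tau> a} * g' + r)"
    by (simp add: perm_mult perm_add gsplit p1 p2 p3 p4)
  then have "PiA A \<tau> * gA A - perm_act \<sigma> (PiA A \<tau> * gA A) = PiA (insert a A) \<tau> * gA (insert a A)"
    using insert.hyps by (simp add: gsplit g'_def PiA_def algebra_simps)
  moreover have "PiA A \<tau> * gA A - perm_act \<sigma> (PiA A \<tau> * gA A) \<in> ideal_gen N (orbit N f)"
    by (rule ideal_gen_diff[OF h orbit_perm[OF sp h]])
  ultimately show ?case by simp
qed

end



lemma perm_extend: fixes N :: nat and h :: "nat \<Rightarrow> nat" assumes "D \<subseteq> {..<N}" "inj_on h D" "h ` D \<subseteq> {..<N}"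
  shows "\<exists>\<sigma>. \<sigma> permutes {..<N} \<and> (\<forall>x\<in>D. \<sigma> x = h x)"
proof -
  let ?S = "{..<N}"
  have fD: "finite D" using assms(1) finite_subset by blast
  have "card (?S - D) = card (?S - h ` D)"
    using assms fD by (simp add: card_Diff_subset card_image)
  then obtain g where g: "bij_betw g (?S - D) (?S - h ` D)"
    using finite_same_card_bij[of "?S - D" "?S - h ` D"] by auto
  define \<sigma> where "\<sigma> x = (if x \<in> D then h x else if x \<in> ?S then g x else x)" for x
  have img: "\<sigma> ` ?S = ?S"
  proof
    show "\<sigma> ` ?S \<subseteq> ?S"
    proof
      fix y assume "y \<in> \<sigma> ` ?S"
      then obtain x where x: "x \<in> ?S" "y = \<sigma> x" by blast
      show "y \<in> ?S"
      proof (cases "x \<in> D")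
        case True then show ?thesis using x assms(3) by (auto simp: \<sigma>_def)
      next
        case False then have "g x \<in> ?S - h ` D" using x g by (auto simp: bij_betw_def)
        then show ?thesis using x False by (simp add: \<sigma>_def)
      qed
    qed
    show "?S \<subseteq> \<sigma> ` ?S"
    proof
      fix y assume y: "y \<in> ?S"
      show "y \<in> \<sigma> ` ?S"
      proof (cases "y \<in> h ` D")
        case True then obtain x where "x \<in> D" "y = h x" by blast
        then show ?thesis using assms(1) by (auto simp: \<sigma>_def intro!: image_eqI[of _ _ x])
      next
        case False then have "y \<in> g ` (?S - D)" using y g by (auto simp: bij_betw_def)
        then obtain x where "x \<in> ?S - D" "y = g x" by blast
        then show ?thesis by (auto simp: \<sigma>_def intro!: image_eqI[of _ _ x])
      qed
    qed
  qed
  have "inj_on \<sigma> ?S" by (rule eq_card_imp_inj_on) (simp_all add: img)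
  then have "bij_betw \<sigma> ?S ?S" using img by (simp add: bij_betw_def)
  then have "\<sigma> permutes ?S" by (rule bij_imp_permutes) (use assms(1) in \<open>auto simp: \<sigma>_def\<close>)
  then show ?thesis by (auto simp: \<sigma>_def)
qed

definition cfg :: "nat \<Rightarrow> nat set \<Rightarrow> (nat \<Rightarrow> nat) \<Rightarrow> nat set \<Rightarrow> bool" where
  "cfg N A \<tau> C \<longleftrightarrow> A \<subseteq> {..<N} \<and> inj_on \<tau> A \<and> \<tau> ` A \<subseteq> {..<N} \<and> A \<inter> \<tau> ` A = {} \<and>
     C \<subseteq> {..<N} \<and> C \<inter> (A \<union> \<tau> ` A) = {}"

definition EE :: "nat set \<Rightarrow> (nat \<Rightarrow> nat) \<Rightarrow> nat set \<Rightarrow> 'a::comm_ring_1 mpoly" where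
  "EE A \<tau> C = PiA A \<tau> * X C"

lemma move:
  assumes I: "EE A \<tau> C \<in> ideal_gen N (orbit N (f::'a::comm_ring_1 mpoly))"
    and c1: "cfg N A \<tau> C" and c2: "cfg N A' \<tau>' C'"
    and cA: "card A' = card A" and cC: "card C' = card C"
  shows "EE A' \<tau>' C' \<in> ideal_gen N (orbit N f)"
proof -
  have fin: "finite A" "finite C" "finite A'" "finite C'"
    using c1 c2 unfolding cfg_def by (meson finite_lessThan finite_subset)+
  obtain \<beta> where \<beta>: "bij_betw \<beta> A A'" using finite_same_card_bij[of A A'] fin cA by auto
  obtain \<gamma> where \<gamma>: "bij_betw \<gamma> C C'" using finite_same_card_bij[of C C'] fin cC by auto
  define D where "D = A \<union> \<tau> ` A \<union> C"
  define h where "h x = (if x \<in> A then \<beta> x else if x \<in> \<tau> ` A then \<tau>' (\<beta> (the_inv_into A \<tau> x)) else \<gamma> x)" for x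
  have injt: "inj_on \<tau> A" and dis1: "A \<inter> \<tau> ` A = {}" and dis2: "C \<inter> (A \<union> \<tau> ` A) = {}"
    using c1 by (auto simp: cfg_def)
  have hA: "h a = \<beta> a" if "a \<in> A" for a using that by (simp add: h_def)
  have hT: "h (\<tau> a) = \<tau>' (\<beta> a)" if "a \<in> A" for a
  proof -
    have "\<tau> a \<notin> A" using that dis1 by blast
    then show ?thesis using that injt by (simp add: h_def the_inv_into_f_f)
  qed
  have hC: "h x = \<gamma> x" if "x \<in> C" for x using that dis2 by (auto simp: h_def)
  have i1: "h ` A = A'" using \<beta> hA by (simp add: bij_betw_def)
  have "h ` (\<tau> ` A) = \<tau>' ` (\<beta> ` A)" using hT by (force simp: image_image)
  then have i2: "h ` (\<tau> ` A) = \<tau>' ` A'" using \<beta> by (simp add: bij_betw_def)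
  have i3: "h ` C = C'" using \<gamma> hC by (simp add: bij_betw_def)
  have img: "h ` D = A' \<union> \<tau>' ` A' \<union> C'" unfolding D_def image_Un i1 i2 i3 ..
  have cardD: "card D = card A + card A + card C"
    unfolding D_def using fin dis1 dis2 injt
    by (simp add: card_Un_disjoint card_image Int_Un_distrib Int_commute)
  have cardD': "card (A' \<union> \<tau>' ` A' \<union> C') = card A' + card A' + card C'"
    using fin c2 unfolding cfg_def
    by (simp add: card_Un_disjoint card_image Int_Un_distrib Int_commute)
  have fD: "finite D" unfolding D_def using fin by simp
  have injh: "inj_on h D" by (rule eq_card_imp_inj_on[OF fD]) (simp add: img cardD cardD' cA cC)
  have Dsub: "D \<subseteq> {..<N}" using c1 by (auto simp: cfg_def D_def)
  have hsub: "h ` D \<subseteq> {..<N}" using c2 by (auto simp: cfg_def img)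
  obtain \<sigma> where \<sigma>: "\<sigma> permutes {..<N}" "\<forall>x\<in>D. \<sigma> x = h x"
    using perm_extend[OF Dsub injh hsub] by blast
  have injs: "inj \<sigma>" using \<sigma>(1) by (rule permutes_inj)
  have sA: "\<sigma> a = \<beta> a" if "a \<in> A" for a using that \<sigma>(2) hA by (auto simp: D_def)
  have sT: "\<sigma> (\<tau> a) = \<tau>' (\<beta> a)" if "a \<in> A" for a using that \<sigma>(2) hT by (auto simp: D_def)
  have "\<sigma> ` C = h ` C" using \<sigma>(2) by (auto simp: D_def)
  then have sC: "\<sigma> ` C = C'" using i3 by simp
  have "perm_act \<sigma> (PiA A \<tau>) = (\<Prod>a\<in>A. X {\<beta> a} - X {\<tau>' (\<beta> a)} :: 'a mpoly)"
    unfolding PiA_def perm_prod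
    by (rule prod.cong) (simp_all add: perm_diff perm_X sA sT)
  also have "\<dots> = PiA A' \<tau>'"
    unfolding PiA_def by (rule prod.reindex_bij_betw[OF \<beta>, of "\<lambda>a. X {a} - X {\<tau>' a}"])
  finally have pP: "perm_act \<sigma> (PiA A \<tau>) = (PiA A' \<tau>' :: 'a mpoly)" .
  have pX: "perm_act \<sigma> (X C) = (X C' :: 'a mpoly)"
    using fin injs sC by (simp add: perm_X inj_on_subset[OF injs])
  have "perm_act \<sigma> (EE A \<tau> C) = (EE A' \<tau>' C' :: 'a mpoly)"
    by (simp add: EE_def perm_mult pP pX)
  then show ?thesis using orbit_perm[OF \<sigma>(1) I] by simp
qed



lemma Qlem_aux:
  fixes f :: "'a::comm_ring_1 mpoly"
  assumes W: "0 < m \<Longrightarrow> \<forall>A \<tau> C. cfg N A \<tau> C \<and> card A = Suc k \<and> card C = m - 1 \<longrightarrow> EE A \<tau> C \<in> ideal_gen N (orbit N f)"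
    and cf: "cfg N A \<tau> {}" and cA: "card A = k"
    and U': "U' \<subseteq> {..<N}" "U' \<inter> (A \<union> \<tau> ` A) = {}" "card U' = m"
  shows "card (U - U') = j \<Longrightarrow> U \<subseteq> {..<N} \<Longrightarrow> U \<inter> (A \<union> \<tau> ` A) = {} \<Longrightarrow> card U = m \<Longrightarrow>
     PiA A \<tau> * X U - PiA A \<tau> * X U' \<in> ideal_gen N (orbit N f)"
proof (induction j arbitrary: U)
  case 0
  have fU: "finite U" "finite U'" using finite_subset[OF 0(2)] finite_subset[OF U'(1)] by auto
  then have "U \<subseteq> U'" using 0(1) by auto
  then have "U = U'" using fU 0(4) U'(3) by (simp add: card_subset_eq)
  then show ?case by (simp add: ideal_gen_zero)
next
  case (Suc j)
  have fU: "finite U" "finite U'" using finite_subset[OF Suc.prems(2)] finite_subset[OF U'(1)] by auto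
  have fA: "finite A" using cf finite_subset[of A "{..<N}"] unfolding cfg_def by auto
  have "U - U' \<noteq> {}" using Suc.prems(1) by (metis card.empty Zero_not_Suc)
  then obtain u where u: "u \<in> U" "u \<notin> U'" by blast
  have "U' - U \<noteq> {}"
  proof
    assume "U' - U = {}"
    then have "U' \<subseteq> U" by auto
    then have "U' = U" using fU Suc.prems(4) U'(3) by (simp add: card_subset_eq)
    then show False using u by simp
  qed
  then obtain u' where u': "u' \<in> U'" "u' \<notin> U" by blast
  have m0: "0 < m" using u fU Suc.prems(4) by (metis card_gt_0_iff empty_iff)
  define U1 where "U1 = insert u' (U - {u})"
  have U1a: "U1 - U' = (U - U') - {u}" using u u' by (auto simp: U1_def)
  have cU1: "card (U1 - U') = j" using Suc.prems(1) u unfolding U1a by (simp add: fU)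
  have U1s: "U1 \<subseteq> {..<N}" using Suc.prems(2) U'(1) u' by (auto simp: U1_def)
  have U1d: "U1 \<inter> (A \<union> \<tau> ` A) = {}" using Suc.prems(3) U'(2) u' by (auto simp: U1_def)
  have U1c: "card U1 = m" using Suc.prems(4) u u' fU m0 by (simp add: U1_def)
  have IH: "PiA A \<tau> * X U1 - PiA A \<tau> * X U' \<in> ideal_gen N (orbit N f)"
    using Suc.IH[OF cU1 U1s U1d U1c] .
  define \<tau>1 where "\<tau>1 = \<tau>(u := u')"
  have uA: "u \<notin> A" "u \<notin> \<tau> ` A" using Suc.prems(3) u by auto
  have u'A: "u' \<notin> A" "u' \<notin> \<tau> ` A" using U'(2) u' by auto
  have injt: "inj_on \<tau> A" and dis1: "A \<inter> \<tau> ` A = {}" and As: "A \<subseteq> {..<N}" "\<tau> ` A \<subseteq> {..<N}"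
    using cf by (auto simp: cfg_def)
  have t1A: "\<tau>1 a = \<tau> a" if "a \<in> A" for a using that uA by (auto simp: \<tau>1_def)
  have img1: "\<tau>1 ` insert u A = insert u' (\<tau> ` A)"
  proof -
    have "\<tau>1 ` A = \<tau> ` A" by (rule image_cong[OF refl t1A])
    moreover have "\<tau>1 u = u'" by (simp add: \<tau>1_def)
    ultimately show ?thesis by (simp only: image_insert)
  qed
  have inj1: "inj_on \<tau>1 (insert u A)"
  proof -
    have "inj_on \<tau>1 A" using inj_on_cong[of A \<tau>1 \<tau>] t1A injt by simp
    moreover have "\<tau>1 u \<notin> \<tau>1 ` A" using t1A u'A by (auto simp: \<tau>1_def)
    ultimately show ?thesis using uA by simp
  qed
  have cfg1: "cfg N (insert u A) \<tau>1 (U - {u})"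
    unfolding cfg_def img1 using inj1 As Suc.prems(2,3) U'(1) u u' uA u'A dis1 by auto
  have card1: "card (insert u A) = Suc k" using fA uA cA by simp
  have card2: "card (U - {u}) = m - 1" using fU u Suc.prems(4) by simp
  have E1: "EE (insert u A) \<tau>1 (U - {u}) \<in> ideal_gen N (orbit N f)"
    using W[OF m0, rule_format, OF conjI[OF cfg1 conjI[OF card1 card2]]] .
  have XU: "X U = X {u} * X (U - {u})"
  proof -
    have "U = {u} \<union> (U - {u})" using u by auto
    then have "X U = X ({u} \<union> (U - {u}))" by simp
    also have "\<dots> = X {u} * X (U - {u})" by (rule X_union) (use fU in auto)
    finally show ?thesis .
  qed
  have XU1: "X U1 = X {u'} * X (U - {u})"
  proof -
    have "X U1 = X ({u'} \<union> (U - {u}))" by (simp add: U1_def)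
    also have "\<dots> = X {u'} * X (U - {u})" by (rule X_union) (use fU u' in auto)
    finally show ?thesis .
  qed
  have P1: "PiA (insert u A) \<tau>1 = (X {u} - X {u'}) * PiA A \<tau>"
  proof -
    have a: "PiA (insert u A) \<tau>1 = (X {u} - X {\<tau>1 u}) * (\<Prod>a\<in>A. X {a} - X {\<tau>1 a})"
      unfolding PiA_def using fA uA by simp
    have b: "(\<Prod>a\<in>A. X {a} - X {\<tau>1 a}) = PiA A \<tau>"
      unfolding PiA_def by (rule prod.cong) (simp_all add: t1A)
    have c: "\<tau>1 u = u'" by (simp add: \<tau>1_def)
    show ?thesis by (simp only: a b c)
  qed
  have "PiA A \<tau> * X U - PiA A \<tau> * X U1 = (EE (insert u A) \<tau>1 (U - {u}) :: 'a mpoly)"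
    by (simp add: EE_def P1 XU XU1 algebra_simps)
  then have "PiA A \<tau> * X U - PiA A \<tau> * X U1 \<in> ideal_gen N (orbit N f)" using E1 by simp
  from ideal_gen_add[OF this IH] show ?case by simp
qed



lemma Cst_sum: "Cst (sum g A) = (\<Sum>a\<in>A. Cst (g a))"
  by (induction A rule: infinite_finite_induct) (simp_all add: Cst_def single_add)

lemma binom_nz:
  assumes char: "CHAR('a::field) = 0 \<or> CHAR('a) > n" and "d \<le> n" "k \<le> d"
  shows "of_nat (d choose k) \<noteq> (0::'a)"
proof
  assume "of_nat (d choose k) = (0::'a)"
  then have dv: "CHAR('a) dvd (d choose k)" by (simp add: of_nat_eq_0_iff_char_dvd)
  have pos: "d choose k > 0" using assms(3) by simp
  show False
  proof (cases "CHAR('a) = 0")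
    case True then show ?thesis using dv pos by simp
  next
    case False
    then have gt: "CHAR('a) > n" using char by simp
    have pr: "prime CHAR('a)" using False by (intro prime_CHAR_semidom) simp
    have "(d choose k) dvd fact d"
      using binomial_fact_lemma[OF assms(3)] by (metis dvd_triv_right)
    then have "CHAR('a) dvd fact d" using dv dvd_trans by blast
    then have "CHAR('a) \<le> d" using prime_dvd_fact_iff[OF pr] by simp
    then show False using gt assms(2) by simp
  qed
qed

context stp
begin

definition s :: "nat set \<Rightarrow> 'a" where "s A = (\<Sum>S\<in>{S\<in>PP. A \<subseteq> S}. c S)"

definition W :: "nat \<Rightarrow> bool" where
  "W k \<longleftrightarrow> (\<forall>A \<tau> C. cfg N A \<tau> C \<and> card A = k \<and> card C = d - k \<longrightarrow> EE A \<tau> C \<in> ideal_gen N (orbit N f))"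

lemma step:
  assumes kd: "k \<le> d" and Wk: "k < d \<Longrightarrow> W (Suc k)" and dn: "d \<le> n"
    and A0: "A0 \<subseteq> {..<n}" "card A0 = k" and s0: "s A0 \<noteq> 0"
  shows "W k"
proof -
  have fA0: "finite A0" using finite_subset[OF A0(1)] by simp
  have "card {n..<n+k} = k" by simp
  then obtain \<tau>0 where t0: "bij_betw \<tau>0 A0 {n..<n+k}"
    using finite_same_card_bij[of A0 "{n..<n+k}"] fA0 A0(2) by auto
  have inj0: "inj_on \<tau>0 A0" using t0 by (simp add: bij_betw_def)
  have tsub: "\<tau>0 ` A0 \<subseteq> {n..<N}" using t0 kd Nbig by (auto simp: bij_betw_def)
  have "d - k \<le> card ({..<n} - A0)" using A0 fA0 dn by (simp add: card_Diff_subset)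
  then obtain C0 where C0: "C0 \<subseteq> {..<n} - A0" "card C0 = d - k" "finite C0"
    using obtain_subset_with_card_n by metis
  have cf0: "cfg N A0 \<tau>0 C0" unfolding cfg_def using A0(1) inj0 tsub C0(1) Nbig by fastforce
  have cfE: "cfg N A0 \<tau>0 {}" unfolding cfg_def using A0(1) inj0 tsub Nbig by fastforce
  have F: "PiA A0 \<tau>0 * gA A0 \<in> ideal_gen N (orbit N f)"
    using F_mem[OF fA0 A0(1) inj0 tsub] .
  have Wm: "\<forall>A \<tau> C. cfg N A \<tau> C \<and> card A = Suc k \<and> card C = d - k - 1 \<longrightarrow> EE A \<tau> C \<in> ideal_gen N (orbit N f)"
    if "0 < d - k"
  proof -
    have "W (Suc k)" using Wk that by simp
    then show ?thesis unfolding W_def by simp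
  qed
  have tn: "\<And>x. x \<in> A0 \<Longrightarrow> n \<le> \<tau>0 x" using tsub by auto
  have C0s: "C0 \<subseteq> {..<N}" "C0 \<inter> (A0 \<union> \<tau>0 ` A0) = {}" using C0(1) tn Nbig by (auto, fastforce)
  have diffS: "PiA A0 \<tau>0 * X (S - A0) - PiA A0 \<tau>0 * X C0 \<in> ideal_gen N (orbit N f)"
    if S: "S \<in> {S\<in>PP. A0 \<subseteq> S}" for S
  proof -
    have Sn: "S \<subseteq> {..<n}" "card S = d" "A0 \<subseteq> S" using S by (auto simp: PP_def)
    have fS: "finite S" using finite_subset[OF Sn(1)] by simp
    show ?thesis
    proof (rule Qlem_aux[OF Wm cfE A0(2) C0s C0(2) refl])
      show "S - A0 \<subseteq> {..<N}" using Sn Nbig by auto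
      show "(S - A0) \<inter> (A0 \<union> \<tau>0 ` A0) = {}" using Sn tn by fastforce
      show "card (S - A0) = d - k" using Sn fS A0(2) by (simp add: card_Diff_subset finite_subset)
    qed
  qed
  have eq1: "PiA A0 \<tau>0 * gA A0 = (\<Sum>S\<in>{S\<in>PP. A0 \<subseteq> S}. Cst (c S) * (PiA A0 \<tau>0 * X (S - A0)))"
    by (simp add: gA_def sum_distrib_left mult.left_commute)
  have eq2: "Cst (s A0) * EE A0 \<tau>0 C0 = (\<Sum>S\<in>{S\<in>PP. A0 \<subseteq> S}. Cst (c S) * (PiA A0 \<tau>0 * X C0))"
    by (simp add: s_def Cst_sum sum_distrib_right EE_def)
  have "PiA A0 \<tau>0 * gA A0 - Cst (s A0) * EE A0 \<tau>0 C0 =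
     (\<Sum>S\<in>{S\<in>PP. A0 \<subseteq> S}. Cst (c S) * (PiA A0 \<tau>0 * X (S - A0) - PiA A0 \<tau>0 * X C0))"
    unfolding eq1 eq2 by (simp add: sum_subtractf right_diff_distrib)
  also have "\<dots> \<in> ideal_gen N (orbit N f)"
    by (rule ideal_gen_sum, rule ideal_gen_mult[OF diffS in_vars_Cst])
  finally have D: "PiA A0 \<tau>0 * gA A0 - Cst (s A0) * EE A0 \<tau>0 C0 \<in> ideal_gen N (orbit N f)" .
  have "PiA A0 \<tau>0 * gA A0 - (PiA A0 \<tau>0 * gA A0 - Cst (s A0) * EE A0 \<tau>0 C0) \<in> ideal_gen N (orbit N f)"
    by (rule ideal_gen_diff[OF F D])
  then have "Cst (s A0) * EE A0 \<tau>0 C0 \<in> ideal_gen N (orbit N f)" by simp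
  then have "Cst (inverse (s A0)) * (Cst (s A0) * EE A0 \<tau>0 C0) \<in> ideal_gen N (orbit N f)"
    by (rule ideal_gen_mult) simp
  then have E0: "EE A0 \<tau>0 C0 \<in> ideal_gen N (orbit N f)"
    using s0 by (simp add: mult.assoc[symmetric] Cst_mult)
  show "W k" unfolding W_def
  proof (intro allI impI)
    fix A \<tau> C assume H: "cfg N A \<tau> C \<and> card A = k \<and> card C = d - k"
    show "EE A \<tau> C \<in> ideal_gen N (orbit N f)"
      by (rule move[OF E0 cf0]) (use H A0(2) C0(2) in auto)
  qed
qed


lemma d_le_n: assumes "ev f \<noteq> 0" shows "d \<le> n"
proof -
  have "f \<noteq> 0" using assms by auto
  then obtain a where "a \<in> Poly_Mapping.keys f" by (metis keys_eq_empty equals0I)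
  then have "Poly_Mapping.keys a \<in> PP" by (rule keys_f)
  then show ?thesis unfolding PP_def by (metis (mono_tags, lifting) card_lessThan card_mono finite_lessThan mem_Collect_eq)
qed

lemma s_exists:
  assumes char: "CHAR('a) = 0 \<or> CHAR('a) > n" and dn: "d \<le> n" and kd: "k \<le> d" and ev0: "ev f \<noteq> 0"
  shows "\<exists>A. A \<subseteq> {..<n} \<and> card A = k \<and> s A \<noteq> 0"
proof (rule ccontr)
  assume nex: "\<not> ?thesis"
  define Ak where "Ak = {A. A \<subseteq> {..<n} \<and> card A = k}"
  have fAk: "finite Ak" unfolding Ak_def by (rule finite_subset[of _ "Pow {..<n}"]) auto
  have "(\<Sum>A\<in>Ak. s A) = (\<Sum>A\<in>Ak. \<Sum>S\<in>{S. S \<in> PP \<and> A \<subseteq> S}. c S)"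
    by (simp add: s_def)
  also have "\<dots> = (\<Sum>S\<in>PP. \<Sum>A\<in>{A. A \<in> Ak \<and> A \<subseteq> S}. c S)"
    by (rule sum.swap_restrict[OF fAk finite_PP])
  also have "\<dots> = (\<Sum>S\<in>PP. of_nat (d choose k) * c S)"
  proof (rule sum.cong)
    fix S assume S: "S \<in> PP"
    then have Sn: "S \<subseteq> {..<n}" "card S = d" by (auto simp: PP_def)
    have fS: "finite S" using finite_subset[OF Sn(1)] by simp
    have "{A. A \<in> Ak \<and> A \<subseteq> S} = {B. B \<subseteq> S \<and> card B = k}" using Sn by (auto simp: Ak_def)
    then have "card {A. A \<in> Ak \<and> A \<subseteq> S} = d choose k" using n_subsets[OF fS, of k] Sn by simp
    then show "(\<Sum>A\<in>{A. A \<in> Ak \<and> A \<subseteq> S}. c S) = of_nat (d choose k) * c S" by simp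
  qed simp
  also have "\<dots> = of_nat (d choose k) * ev f" by (simp add: ev_f sum_distrib_left)
  finally have eq: "(\<Sum>A\<in>Ak. s A) = of_nat (d choose k) * ev f" .
  have "(\<Sum>A\<in>Ak. s A) = 0" using nex by (intro sum.neutral) (auto simp: Ak_def)
  then show False using eq binom_nz[OF char dn kd] ev0 by simp
qed

lemma main_W: assumes char: "CHAR('a) = 0 \<or> CHAR('a) > n" and ev0: "ev f \<noteq> 0"
  shows "W 0"
proof -
  have dn: "d \<le> n" using d_le_n[OF ev0] .
  have "\<forall>m\<le>d. W (d - m)"
  proof (intro allI impI)
    fix m assume "m \<le> d" then show "W (d - m)"
    proof (induction m)
      case 0
      obtain A where A: "A \<subseteq> {..<n}" "card A = d" "s A \<noteq> 0" using s_exists[OF char dn order.refl ev0] by blast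
      show ?case using step[OF order.refl _ dn A] by simp
    next
      case (Suc m)
      have k: "d - Suc m \<le> d" by simp
      obtain A where A: "A \<subseteq> {..<n}" "card A = d - Suc m" "s A \<noteq> 0" using s_exists[OF char dn k ev0] by blast
      have "W (Suc (d - Suc m))" using Suc by (simp add: Suc_diff_Suc)
      then show ?case using step[OF k _ dn A] by simp
    qed
  qed
  then show ?thesis by (metis diff_self_eq_0 order.refl)
qed

lemma main_X: assumes char: "CHAR('a) = 0 \<or> CHAR('a) > n" and ev0: "ev f \<noteq> 0"
  and C: "C \<subseteq> {..<N}" "card C = d"
  shows "X C \<in> ideal_gen N (orbit N f)"
proof -
  have "cfg N {} id C" using C by (simp add: cfg_def)
  then have "EE {} id C \<in> ideal_gen N (orbit N f)" using main_W[OF char ev0] C by (simp add: W_def)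
  then show ?thesis by (simp add: EE_def PiA_def)
qed

end



theorem theorem1p7:
  fixes f :: "'a::field mpoly" and n d :: nat
  assumes char: "CHAR('a) = 0 \<or> CHAR('a) > n"
    and f_vars: "in_vars n f"
    and homog: "\<forall>\<alpha>\<in>Poly_Mapping.keys f. (\<Sum>i\<in>Poly_Mapping.keys \<alpha>. Poly_Mapping.lookup \<alpha> i) = d"
    and sqfree: "\<forall>\<alpha>\<in>Poly_Mapping.keys f. \<forall>i. Poly_Mapping.lookup \<alpha> i \<le> 1"
  shows "(eval_mpoly f (\<lambda>_. 1) \<noteq> 0 \<longrightarrow>
            (\<forall>N \<ge> n + d. ideal_gen N (orbit N f) = ideal_gen N (orbit N (prod_first_vars d))))
       \<and> (eval_mpoly f (\<lambda>_. 1) = 0 \<longrightarrow>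
            (\<forall>N \<ge> n. \<forall>\<alpha> k. Poly_Mapping.keys \<alpha> \<subseteq> {..<N} \<longrightarrow>
                 monom1 \<alpha> ^ k \<notin> ideal_gen N (orbit N f)))"
proof (intro conjI impI allI)
  fix N \<alpha> k assume "eval_mpoly f (\<lambda>_. 1) = 0"
  then show "monom1 \<alpha> ^ k \<notin> ideal_gen N (orbit N f)" by (rule part2)
next
  fix N assume ev: "eval_mpoly f (\<lambda>_. 1) \<noteq> 0" and NN: "n + d \<le> N"
  have ev0: "ev f \<noteq> 0" using ev by (simp add: ev_eval)
  interpret F: stp f n d N using f_vars homog sqfree NN by unfold_locales
  have dn: "d \<le> n" by (rule F.d_le_n[OF ev0])
  define g :: "'a mpoly" where "g = X {..<d}"
  have pfv: "prod_first_vars d = g" by (simp add: g_def prod_first_vars_def X_def sq_def)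
  have kg: "Poly_Mapping.keys g = {sq {..<d}}" by (simp add: g_def X_def monom1_def)
  have g_vars: "in_vars d g" by (simp add: in_vars_def kg keys_sq)
  have g_hom: "\<forall>\<alpha>\<in>Poly_Mapping.keys g. (\<Sum>i\<in>Poly_Mapping.keys \<alpha>. Poly_Mapping.lookup \<alpha> i) = d"
    by (simp add: kg keys_sq lookup_sq)
  have g_sf: "\<forall>\<alpha>\<in>Poly_Mapping.keys g. \<forall>i. Poly_Mapping.lookup \<alpha> i \<le> 1"
    by (simp add: kg lookup_sq)
  have gN: "d + d \<le> N" using NN dn by linarith
  interpret G: stp g d d N using g_vars g_hom g_sf gN by unfold_locales
  have charg: "CHAR('a) = 0 \<or> CHAR('a) > d" using char dn by auto
  have evg: "ev g \<noteq> 0" by (simp add: g_def X_def monom1_def)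
  show "ideal_gen N (orbit N f) = ideal_gen N (orbit N (prod_first_vars d))"
    unfolding pfv
  proof
    show "ideal_gen N (orbit N f) \<subseteq> ideal_gen N (orbit N g)"
    proof (rule ideal_gen_subset, rule subsetI)
      have fJ: "f \<in> ideal_gen N (orbit N g)"
      proof -
        have "(\<Sum>S\<in>F.PP. Cst (F.c S) * X S) \<in> ideal_gen N (orbit N g)"
        proof (rule ideal_gen_sum)
          fix S assume "S \<in> F.PP"
          then have "S \<subseteq> {..<N}" "card S = d" using NN by (auto simp: F.PP_def)
          then have "X S \<in> ideal_gen N (orbit N g)" by (rule G.main_X[OF charg evg])
          then show "Cst (F.c S) * X S \<in> ideal_gen N (orbit N g)" by (rule ideal_gen_mult) simp
        qed
        then show ?thesis unfolding F.f_expand[symmetric] .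
      qed
      fix q assume "q \<in> orbit N f"
      then obtain \<sigma> where sp: "\<sigma> permutes {..<N}" and qq: "q = perm_act \<sigma> f" unfolding orbit_def by blast
      show "q \<in> ideal_gen N (orbit N g)" unfolding qq by (rule orbit_perm[OF sp fJ])
    qed
    show "ideal_gen N (orbit N g) \<subseteq> ideal_gen N (orbit N f)"
    proof (rule ideal_gen_subset, rule subsetI)
      fix q assume "q \<in> orbit N g"
      then obtain \<sigma> where sp: "\<sigma> permutes {..<N}" and q: "q = perm_act \<sigma> g" unfolding orbit_def by blast
      have inj: "inj \<sigma>" using sp by (rule permutes_inj)
      have q2: "q = X (\<sigma> ` {..<d})" unfolding q g_def by (rule perm_X) (simp_all add: inj_on_subset[OF inj])
      have sub: "\<sigma> ` {..<d} \<subseteq> {..<N}"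
      proof
        fix y assume "y \<in> \<sigma> ` {..<d}"
        then obtain x where x: "x < d" "y = \<sigma> x" by blast
        have "x \<in> {..<N}" using x(1) NN by simp
        then show "y \<in> {..<N}" unfolding x(2) using permutes_in_image[OF sp, of x] by simp
      qed
      have card: "card (\<sigma> ` {..<d}) = d" using card_image[OF inj_on_subset[OF inj subset_UNIV], of "{..<d}"] by simp
      show "q \<in> ideal_gen N (orbit N f)" unfolding q2 by (rule F.main_X[OF char ev0 sub card])
    qed
  qed
qed

end
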